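(* For each $n\ge 3$, let $k$ be chosen uniformly at random from $\mathbb{Z}_n^\times$. Then $\mathbf{E}[D(\psi_k)]=O(\log^2 n\,\log\log n)$, with an absolute implicit constant. In particular, for every such $n$ there exists $k\in\mathbb{Z}_n^\times$ with $D(\psi_k)=O(\log^2 n\,\log\log n)$.
   Context: For $k\in\mathbb{Z}_n^\times$ (the units of $\mathbb{Z}_n$), $\psi_k:\mathbb{Z}_n\to\mathbb{Z}_n$ is the permutation $\psi_k(s)=ks$. An interval of $\mathbb{Z}_n$ is any subset that is the image of an interval of consecutive integers under the projection $\mathbb{Z}\to\mathbb{Z}_n$ (wrap-around allowed). For $S,T\subseteq\mathbb{Z}_n$, $D_T(S)=\bigl|\,|S\cap T|-|S||T|/n\,\bigr|$, and for a permutation $\sigma$ of $\mathbb{Z}_n$, $D(\sigma)=\max_{I,J}D_J(\sigma(I))$ over all intervals $I,J$ of $\mathbb{Z}_n$. *)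

theory Defs
  imports Complex_Main "HOL-Number_Theory.Number_Theory"
begin

definition Zn :: "nat \<Rightarrow> nat set" where
  "Zn n = {0..<n}"

definition Zn_units :: "nat \<Rightarrow> nat set" where
  "Zn_units n = {k \<in> Zn n. coprime k n}"

text \<open>Intervals of Z_n: images of runs of L consecutive integers a, a+1, ..., a+L-1
  under reduction mod n (wrap-around allowed; L = 0 gives the empty interval).\<close>
definition zinterval :: "nat \<Rightarrow> nat \<Rightarrow> nat \<Rightarrow> nat set" where
  "zinterval n a L = (\<lambda>i. (a + i) mod n) ` {..<L}"

definition is_zinterval :: "nat \<Rightarrow> nat set \<Rightarrow> bool" where
  "is_zinterval n I \<longleftrightarrow> (\<exists>a L. I = zinterval n a L)"

definition psi :: "nat \<Rightarrow> nat \<Rightarrow> nat \<Rightarrow> nat" where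
  "psi n k s = (k * s) mod n"

definition DT :: "nat \<Rightarrow> nat set \<Rightarrow> nat set \<Rightarrow> real" where
  "DT n T S = \<bar>real (card (S \<inter> T)) - real (card S) * real (card T) / real n\<bar>"

definition discrepancy :: "nat \<Rightarrow> (nat \<Rightarrow> nat) \<Rightarrow> real" where
  "discrepancy n \<sigma> =
     Max {DT n J (\<sigma> ` I) | I J. is_zinterval n I \<and> is_zinterval n J}"

end

theory Submission imports Defs "HOL-Analysis.Analysis" begin

definition om :: "nat \<Rightarrow> complex" where "om n = cis (2*pi/real n)"
definition ft :: "nat \<Rightarrow> nat set \<Rightarrow> nat \<Rightarrow> complex" where
  "ft n A h = (\<Sum>x\<in>A. om n ^ (h*x))"
definition gb :: "nat \<Rightarrow> nat \<Rightarrow> real" where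
  "gb n c = 1/real c + 1/(real n - real c)"

lemma om_pow: "om n ^ x = cis (2*pi*real x/real n)"
  by (simp only: om_def Complex.DeMoivre) (simp add: field_simps)

lemma om_n: "n > 0 \<Longrightarrow> om n ^ n = 1"
  by (simp add: om_pow)

lemma norm_om: "norm (om n ^ x) = 1"
  by (simp add: om_pow)

lemma om_mod: assumes "n > 0" shows "om n ^ x = om n ^ (x mod n)"
proof -
  have "om n ^ x = om n ^ (n * (x div n) + x mod n)" by (simp only: mult_div_mod_eq)
  also have "\<dots> = (om n ^ n) ^ (x div n) * om n ^ (x mod n)" by (simp only: power_add power_mult)
  finally show ?thesis using om_n[OF assms] by simp
qed

lemma sin_lb: fixes y :: real assumes "0 \<le> y" "y \<le> 2" shows "y/3 \<le> sin y"
proof -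
  have "\<bar>sin y - (\<Sum>m<3. sin_coeff m * y ^ m)\<bar> \<le> inverse (fact 3) * \<bar>y\<bar> ^ 3"
    by (rule Maclaurin_sin_bound)
  moreover have "(\<Sum>m<3. sin_coeff m * y ^ m) = y"
    by (simp add: numeral_3_eq_3 sin_coeff_def)
  ultimately have "\<bar>sin y - y\<bar> * 6 \<le> y^3" using assms by (simp add: fact_numeral)
  hence "6 * (y - sin y) \<le> y^3" using abs_ge_minus_self[of "sin y - y"] by (smt (verit))
  hence "y - y^3/6 \<le> sin y" by (simp add: field_simps)
  moreover have "y^3 \<le> 4 * y"
  proof -
    have "y^2 \<le> 2^2" using assms by (intro power_mono) auto
    hence "y * y^2 \<le> y * 4" using assms by (intro mult_left_mono) auto
    thus ?thesis by (simp add: power3_eq_cube power2_eq_square mult.commute)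
  qed
  ultimately show ?thesis by linarith
qed

lemma aux_id: "(1 - (1 - 2*a^2))^2 + (2*a*b)^2 = 4*a^2*(a^2+b^2::real)"
  by (simp add: power2_eq_square algebra_simps)

lemma norm_1_cis: "norm (1 - cis t) = 2 * \<bar>sin (t/2)\<bar>"
proof -
  have c: "cos t = 1 - 2 * sin(t/2)^2" using cos_double_sin[of "t/2"] by simp
  have s: "sin t = 2 * sin (t/2) * cos (t/2)" using sin_double[of "t/2"] by simp
  have "(norm (1 - cis t))^2 = (1 - cos t)^2 + (sin t)^2"
    by (simp add: cmod_def)
  also have "\<dots> = 4 * (sin (t/2))^2"
  proof -
    have "(1 - cos t)^2 + (sin t)^2 = 4 * (sin (t/2))^2 * ((sin (t/2))^2 + (cos (t/2))^2)"
      unfolding c s by (rule aux_id)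
    thus ?thesis using sin_cos_squared_add[of "t/2"] by simp
  qed
  also have "\<dots> = (2 * \<bar>sin (t/2)\<bar>)^2" by (simp add: power2_eq_square)
  finally show ?thesis
    by (metis abs_norm_cancel abs_mult abs_of_nonneg power2_eq_imp_eq norm_ge_zero zero_le_numeral abs_ge_zero mult_nonneg_nonneg)
qed

lemma jordan:
  assumes "0 < c" "c < n"
  shows "2 * real (min c (n-c)) / real n \<le> norm (1 - om n ^ c)"
proof -
  have n0: "real n > 0" using assms by simp
  have "norm (1 - om n ^ c) = 2 * \<bar>sin (pi * real c / real n)\<bar>"
    unfolding om_pow norm_1_cis by (simp add: field_simps)
  also have "sin (pi * real c / real n) = sin (pi * real (min c (n-c)) / real n)"
  proof (cases "c \<le> n - c")
    case False
    hence "min c (n-c) = n - c" by simp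
    moreover have "pi * real (n-c) / real n = pi - pi * real c / real n"
      using assms n0 by (simp add: of_nat_diff field_simps)
    ultimately show ?thesis by (simp add: sin_pi_minus)
  qed simp
  finally have eq: "norm (1 - om n ^ c) = 2 * \<bar>sin (pi * real (min c (n-c)) / real n)\<bar>" .
  define y where "y = pi * real (min c (n-c)) / real n"
  have "2 * real (min c (n-c)) \<le> real n" by linarith
  hence "y \<le> pi / 2" using n0 by (simp add: y_def field_simps)
  hence y2: "y \<le> 2" using pi_less_4 by linarith
  have y0: "0 \<le> y" using n0 by (simp add: y_def)
  have "y/3 \<le> sin y" using sin_lb[OF y0 y2] .
  moreover have "real (min c (n-c)) / real n \<le> y/3"
  proof -
    have "3 * real (min c (n-c)) \<le> pi * real (min c (n-c))"
      by (intro mult_right_mono) (use pi_gt3 in auto)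
    thus ?thesis using n0 unfolding y_def by (simp add: field_simps)
  qed
  ultimately have "real (min c (n-c)) / real n \<le> \<bar>sin y\<bar>" by linarith
  thus ?thesis unfolding eq y_def by simp
qed

lemma om_ne1:
  assumes "n > 0" "\<not> n dvd x" shows "om n ^ x \<noteq> 1"
proof -
  have c: "0 < x mod n" "x mod n < n" using assms by (auto simp: mod_greater_zero_iff_not_dvd)
  hence "0 < 2 * real (min (x mod n) (n - x mod n)) / real n" by simp
  also have "\<dots> \<le> norm (1 - om n ^ (x mod n))" by (rule jordan[OF c])
  finally show ?thesis using om_mod[OF assms(1), of x] by auto
qed

lemma orth:
  assumes "n > 0"
  shows "(\<Sum>h<n. om n ^ (h*x)) = (if n dvd x then of_nat n else 0)"
proof (cases "n dvd x")
  case True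
  then obtain q where "x = n*q" by auto
  have "om n ^ (h*x) = 1" for h
  proof -
    have "om n ^ (h*x) = (om n ^ n) ^ (h*q)" unfolding \<open>x = n*q\<close>
      by (metis power_mult mult.left_commute)
    thus ?thesis using om_n[OF assms] by simp
  qed
  thus ?thesis using True by simp
next
  case False
  define z where "z = om n ^ x"
  have z1: "z \<noteq> 1" using om_ne1[OF assms False] z_def by simp
  have "(\<Sum>h<n. om n ^ (h*x)) = (\<Sum>h<n. z ^ h)"
    unfolding z_def by (intro sum.cong refl) (metis power_mult mult.commute)
  also have "\<dots> = (z^n - 1)/(z - 1)" by (rule geometric_sum[OF z1])
  also have "z^n = 1" unfolding z_def using om_n[OF assms]
    by (metis power_mult power_mult_distrib mult.commute power_one)
  finally show ?thesis using False by simp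
qed

lemma geo_bound:
  fixes z :: complex
  assumes "norm z = 1" "z \<noteq> 1"
  shows "norm (\<Sum>i<L. z^i) \<le> 2 / norm (1 - z)"
proof -
  have "(\<Sum>i<L. z^i) = (z^L - 1)/(z - 1)" by (rule geometric_sum[OF assms(2)])
  hence "norm (\<Sum>i<L. z^i) = norm (z^L - 1) / norm (1 - z)"
    by (simp add: norm_divide norm_minus_commute)
  also have "norm (z^L - 1) \<le> 2"
    using norm_triangle_ineq4[of "z^L" 1] assms(1) by (simp add: norm_power)
  hence "norm (z^L - 1) / norm (1 - z) \<le> 2 / norm (1 - z)"
    by (simp add: divide_right_mono)
  finally show ?thesis .
qed

lemma zinterval_sub: "n > 0 \<Longrightarrow> zinterval n a L \<subseteq> {..<n}"
  unfolding zinterval_def by auto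

lemma inj_shift: fixes a n L :: nat assumes "L \<le> n" shows "inj_on (\<lambda>i. (a+i) mod n) {..<L}"
proof (rule inj_onI)
  fix i j assume ij: "i \<in> {..<L}" "j \<in> {..<L}" "(a+i) mod n = (a+j) mod n"
  have "[a+i = a+j] (mod n)" using ij(3) unfolding Cong.cong_def .
  hence "[i = j] (mod n)" by (simp add: cong_add_lcancel_nat)
  thus "i = j" using ij assms by (auto intro: cong_less_modulus_unique_nat)
qed

lemma zinterval_full: assumes "n > 0" "n \<le> L" shows "zinterval n a L = {..<n}"
proof -
  have "zinterval n a n \<subseteq> zinterval n a L" unfolding zinterval_def using assms by auto
  moreover have "card (zinterval n a n) = n"
    unfolding zinterval_def by (simp add: card_image inj_shift)
  ultimately have "card (zinterval n a L) \<ge> n"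
    by (metis card_mono finite_lessThan finite_subset zinterval_sub[OF assms(1)])
  thus ?thesis using zinterval_sub[OF assms(1)]
    by (metis card_lessThan card_seteq finite_lessThan)
qed

lemma om_mult_mod: assumes "n > 0" shows "om n ^ (c * (x mod n)) = om n ^ (c * x)"
proof -
  have "om n ^ (c * (x mod n)) = om n ^ ((c * (x mod n)) mod n)" by (rule om_mod[OF assms])
  also have "(c * (x mod n)) mod n = (c * x) mod n" by (simp add: mod_mult_right_eq)
  also have "om n ^ \<dots> = om n ^ (c*x)" by (rule om_mod[OF assms, symmetric])
  finally show ?thesis .
qed

lemma two_over_bound:
  assumes "0 < c" "c < n"
  shows "2 / norm (1 - om n ^ c) \<le> real n * gb n c"
proof -
  define m where "m = min c (n-c)"
  have m0: "real m > 0" using assms by (simp add: m_def)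
  have n0: "real n > 0" using assms by simp
  have j: "2 * real m / real n \<le> norm (1 - om n ^ c)" using jordan[OF assms] m_def by simp
  have pos: "0 < 2 * real m / real n" using m0 n0 by simp
  have "2 / norm (1 - om n ^ c) \<le> 2 / (2 * real m / real n)"
  proof (rule divide_left_mono[OF j])
    have "0 < norm (1 - om n ^ c)" using pos j by linarith
    thus "0 < norm (1 - om n ^ c) * (2 * real m / real n)" using pos by (rule mult_pos_pos)
  qed simp
  also have "\<dots> = real n / real m" using m0 by simp
  also have "\<dots> \<le> real n * gb n c"
  proof (cases "c \<le> n - c")
    case True
    hence "m = c" by (simp add: m_def)
    moreover have "0 \<le> 1 / (real n - real c)" using assms by simp
    ultimately show ?thesis unfolding gb_def using n0 by (simp add: field_simps)
  next
    case False
    hence "m = n - c" by (simp add: m_def)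
    hence "real m = real n - real c" using assms by simp
    hence g: "gb n c = 1 / real c + 1 / real m" unfolding gb_def by simp
    have "1 / real m \<le> 1 / real c + 1 / real m" using assms by simp
    hence "real n * (1 / real m) \<le> real n * gb n c" unfolding g using n0
      by (intro mult_left_mono) auto
    thus ?thesis by simp
  qed
  finally show ?thesis .
qed

lemma interval_ft:
  assumes n: "n > 0" and I: "is_zinterval n I" and c: "0 < c" "c < n"
  shows "norm (ft n I c) \<le> real n * gb n c"
proof -
  obtain a L where IaL: "I = zinterval n a L" using I unfolding is_zinterval_def by auto
  have ndvd: "\<not> n dvd c" using c by (auto dest: dvd_imp_le)
  have gb0: "0 \<le> gb n c" using c unfolding gb_def by simp
  show ?thesis
  proof (cases "n \<le> L")
    case True
    hence "I = {..<n}" using IaL zinterval_full[OF n] by simp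
    hence "ft n I c = (\<Sum>h<n. om n ^ (h*c))" unfolding ft_def by (simp add: mult.commute)
    also have "\<dots> = 0" using orth[OF n] ndvd by simp
    finally show ?thesis using gb0 by simp
  next
    case False
    have "ft n I c = (\<Sum>i<L. om n ^ (c * ((a+i) mod n)))"
      unfolding ft_def IaL zinterval_def using False
      by (subst sum.reindex) (auto simp: inj_shift)
    also have "\<dots> = (\<Sum>i<L. om n ^ (c*a) * (om n ^ c) ^ i)"
    proof (intro sum.cong refl)
      fix i
      have "om n ^ (c * ((a+i) mod n)) = om n ^ (c*(a+i))" by (rule om_mult_mod[OF n])
      also have "\<dots> = om n ^ (c*a) * (om n ^ c) ^ i"
        by (simp only: distrib_left power_add power_mult)
      finally show "om n ^ (c * ((a+i) mod n)) = om n ^ (c*a) * (om n ^ c) ^ i" .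
    qed
    also have "\<dots> = om n ^ (c*a) * (\<Sum>i<L. (om n ^ c) ^ i)" by (simp add: sum_distrib_left)
    finally have "norm (ft n I c) = norm (\<Sum>i<L. (om n ^ c) ^ i)"
      by (simp add: norm_mult norm_om)
    also have "\<dots> \<le> 2 / norm (1 - om n ^ c)"
      by (rule geo_bound) (use norm_om om_ne1[OF n ndvd] in auto)
    also have "\<dots> \<le> real n * gb n c" by (rule two_over_bound[OF c])
    finally show ?thesis .
  qed
qed

lemma inj_psi: assumes "coprime k n" shows "inj_on (psi n k) {..<n}"
proof (rule inj_onI)
  fix x y assume xy: "x \<in> {..<n}" "y \<in> {..<n}" "psi n k x = psi n k y"
  have "[k*x = k*y] (mod n)" using xy(3) unfolding psi_def Cong.cong_def .
  hence "[x = y] (mod n)" using assms by (simp add: cong_mult_lcancel_nat)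
  thus "x = y" using xy by (auto intro: cong_less_modulus_unique_nat)
qed

lemma psi_ft:
  assumes n: "n > 0" and k: "coprime k n" and I: "I \<subseteq> {..<n}"
  shows "ft n (psi n k ` I) h = ft n I ((h*k) mod n)"
proof -
  have "ft n (psi n k ` I) h = (\<Sum>x\<in>I. om n ^ (h * psi n k x))"
    unfolding ft_def using inj_on_subset[OF inj_psi[OF k] I]
    by (simp add: sum.reindex)
  also have "\<dots> = (\<Sum>x\<in>I. om n ^ (((h*k) mod n) * x))"
  proof (intro sum.cong refl)
    fix x
    have "om n ^ (h * psi n k x) = om n ^ (h * (k*x))" unfolding psi_def by (rule om_mult_mod[OF n])
    also have "\<dots> = om n ^ (x * (h*k))" by (simp add: ac_simps)
    also have "\<dots> = om n ^ (x * ((h*k) mod n))" by (rule om_mult_mod[OF n, symmetric])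
    finally show "om n ^ (h * psi n k x) = om n ^ (((h*k) mod n) * x)" by (simp add: ac_simps)
  qed
  finally show ?thesis unfolding ft_def .
qed

lemma dvd_iff_eq:
  fixes s t n :: nat
  assumes "s < n" "t < n"
  shows "n dvd (s + (n-1)*t) \<longleftrightarrow> s = t"
proof
  assume "s = t"
  have "s + (n-1) * s = n * s" using assms by (cases n) auto
  thus "n dvd (s + (n-1)*t)" using \<open>s = t\<close> by simp
next
  assume d: "n dvd (s + (n-1)*t)"
  have e: "s + (n-1) * t + t = s + n * t" using assms by (cases n) auto
  have m: "(s + (n-1) * t + t) mod n = t mod n"
    using d by (metis add_0 mod_add_left_eq dvd_imp_mod_0)
  have "(s + n * t) mod n = t mod n" using m unfolding e .
  hence "s mod n = t mod n" by simp
  thus "s = t" using assms by simp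
qed

lemma cnj_om: assumes "n > 0" shows "cnj (om n) = om n ^ (n-1)"
proof -
  have "om n * om n ^ (n-1) = 1" using om_n[OF assms] assms
    by (metis Suc_diff_1 power_Suc)
  hence "inverse (om n) = om n ^ (n-1)" by (rule inverse_unique)
  moreover have "cnj (om n) = inverse (om n)" by (simp add: om_def cis_cnj)
  ultimately show ?thesis by simp
qed

lemma ft0: "ft n S 0 = of_nat (card S)"
  by (simp add: ft_def)

lemma fourier_full:
  assumes n: "n > 0" and S: "S \<subseteq> {..<n}" and T: "T \<subseteq> {..<n}"
  shows "(\<Sum>h<n. ft n S h * cnj (ft n T h)) = of_nat n * of_nat (card (S \<inter> T))"
proof -
  have fS: "finite S" and fT: "finite T" using S T finite_subset by auto
  have "(\<Sum>h<n. ft n S h * cnj (ft n T h)) =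
        (\<Sum>h<n. \<Sum>s\<in>S. \<Sum>t\<in>T. om n ^ (h * (s + (n-1)*t)))"
  proof (intro sum.cong refl)
    fix h
    have "ft n S h * cnj (ft n T h) = (\<Sum>s\<in>S. \<Sum>t\<in>T. om n ^ (h * s) * (om n ^ (n-1)) ^ (h * t))"
      unfolding ft_def by (simp add: sum_product cnj_om[OF n])
    also have "\<dots> = (\<Sum>s\<in>S. \<Sum>t\<in>T. om n ^ (h * (s + (n-1)*t)))"
      by (intro sum.cong refl) (simp add: power_add power_mult[symmetric] algebra_simps)
    finally show "ft n S h * cnj (ft n T h) = (\<Sum>s\<in>S. \<Sum>t\<in>T. om n ^ (h * (s + (n-1)*t)))" .
  qed
  also have "\<dots> = (\<Sum>s\<in>S. \<Sum>h<n. \<Sum>t\<in>T. om n ^ (h * (s + (n-1)*t)))"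
    by (rule sum.swap)
  also have "\<dots> = (\<Sum>s\<in>S. \<Sum>t\<in>T. \<Sum>h<n. om n ^ (h * (s + (n-1)*t)))"
    by (rule sum.cong[OF refl], rule sum.swap)
  also have "\<dots> = (\<Sum>s\<in>S. \<Sum>t\<in>T. if t = s then of_nat n else 0)"
  proof (intro sum.cong refl)
    fix s t assume "s \<in> S" "t \<in> T"
    hence "s < n" "t < n" using S T by auto
    thus "(\<Sum>h<n. om n ^ (h * (s + (n-1)*t))) = (if t = s then of_nat n else 0)"
      using orth[OF n] dvd_iff_eq by auto
  qed
  also have "\<dots> = (\<Sum>s\<in>S. if s \<in> T then of_nat n else 0)"
    using fT by (simp add: sum.delta)
  also have "\<dots> = of_nat n * of_nat (card (S \<inter> T))"
    using fS by (simp add: sum.If_cases mult.commute Int_def)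
  finally show ?thesis .
qed

lemma fourier:
  assumes n: "n > 0" and S: "S \<subseteq> {..<n}" and T: "T \<subseteq> {..<n}"
  shows "of_nat n * of_nat (card (S \<inter> T)) - of_nat (card S) * of_nat (card T)
         = (\<Sum>h\<in>{1..<n}. ft n S h * cnj (ft n T h))"
proof -
  have "{..<n} = insert 0 {1..<n}" using n by auto
  hence "(\<Sum>h<n. ft n S h * cnj (ft n T h)) =
         ft n S 0 * cnj (ft n T 0) + (\<Sum>h\<in>{1..<n}. ft n S h * cnj (ft n T h))"
    by simp
  thus ?thesis using fourier_full[OF assms] by (simp add: ft0)
qed

lemma unit_mult_mod:
  fixes k n h :: nat
  assumes k: "coprime k n" and h: "0 < h" "h < n"
  shows "0 < (h*k) mod n" "(h*k) mod n < n"
proof -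
  have "\<not> n dvd h"
    using nat_dvd_not_less[OF h] .
  hence "\<not> n dvd h*k" using k by (simp add: coprime_commute coprime_dvd_mult_left_iff)
  thus "0 < (h*k) mod n" by (simp add: mod_greater_zero_iff_not_dvd)
  show "(h*k) mod n < n" using h by simp
qed

lemma DT_bound:
  assumes n: "n > 0" and k: "coprime k n" and I: "is_zinterval n I" and J: "is_zinterval n J"
  shows "DT n J (psi n k ` I) \<le> real n * (\<Sum>h\<in>{1..<n}. gb n h * gb n ((h*k) mod n))"
proof -
  define S where "S = psi n k ` I"
  have Isub: "I \<subseteq> {..<n}" using I zinterval_sub[OF n] unfolding is_zinterval_def by auto
  have Jsub: "J \<subseteq> {..<n}" using J zinterval_sub[OF n] unfolding is_zinterval_def by auto
  have Ssub: "S \<subseteq> {..<n}" unfolding S_def psi_def using n by auto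
  have "norm (of_nat n * of_nat (card (S \<inter> J)) - of_nat (card S) * of_nat (card J) :: complex)
        = norm (\<Sum>h\<in>{1..<n}. ft n S h * cnj (ft n J h))"
    using fourier[OF n Ssub Jsub] by simp
  also have "\<dots> \<le> (\<Sum>h\<in>{1..<n}. norm (ft n S h) * norm (ft n J h))"
    by (rule order_trans[OF norm_sum]) (simp add: norm_mult)
  also have "\<dots> \<le> (\<Sum>h\<in>{1..<n}. (real n * gb n ((h*k) mod n)) * (real n * gb n h))"
  proof (intro sum_mono mult_mono)
    fix h assume "h \<in> {1..<n}"
    hence h: "0 < h" "h < n" by auto
    have "ft n S h = ft n I ((h*k) mod n)" unfolding S_def by (rule psi_ft[OF n k Isub])
    thus "norm (ft n S h) \<le> real n * gb n ((h*k) mod n)"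
      using interval_ft[OF n I unit_mult_mod[OF k h]] by simp
    show "norm (ft n J h) \<le> real n * gb n h" by (rule interval_ft[OF n J h])
    show "0 \<le> real n * gb n ((h*k) mod n)"
      using unit_mult_mod[OF k h] by (simp add: gb_def)
  qed simp
  also have "\<dots> = real n * real n * (\<Sum>h\<in>{1..<n}. gb n h * gb n ((h*k) mod n))"
    by (simp add: sum_distrib_left algebra_simps)
  finally have nrm: "norm (of_nat n * of_nat (card (S \<inter> J)) - of_nat (card S) * of_nat (card J) :: complex)
     \<le> real n * real n * (\<Sum>h\<in>{1..<n}. gb n h * gb n ((h*k) mod n))" .
  have "(of_nat n * of_nat (card (S \<inter> J)) - of_nat (card S) * of_nat (card J) :: complex)
      = of_real (real n * real (card (S \<inter> J)) - real (card S) * real (card J))" by simp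
  hence key: "\<bar>real n * real (card (S \<inter> J)) - real (card S) * real (card J)\<bar>
     \<le> real n * real n * (\<Sum>h\<in>{1..<n}. gb n h * gb n ((h*k) mod n))"
    using nrm by (simp only: norm_of_real)
  have "DT n J S = \<bar>real n * real (card (S \<inter> J)) - real (card S) * real (card J)\<bar> / real n"
    unfolding DT_def using n by (simp add: field_simps)
  also have "\<dots> \<le> real n * real n * (\<Sum>h\<in>{1..<n}. gb n h * gb n ((h*k) mod n)) / real n"
    by (rule divide_right_mono[OF key]) simp
  also have "\<dots> = real n * (\<Sum>h\<in>{1..<n}. gb n h * gb n ((h*k) mod n))" using n by simp
  finally show ?thesis unfolding S_def .
qed

lemma disc_bound:
  assumes n: "n > 0" and k: "coprime k n"
  shows "discrepancy n (psi n k) \<le> real n * (\<Sum>h\<in>{1..<n}. gb n h * gb n ((h*k) mod n))"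
  unfolding discrepancy_def
proof (rule Max.boundedI)
  let ?A = "{DT n J (psi n k ` I) | I J. is_zinterval n I \<and> is_zinterval n J}"
  have "?A \<subseteq> (\<lambda>p. DT n (snd p) (psi n k ` fst p)) ` (Pow {..<n} \<times> Pow {..<n})"
  proof
    fix a assume "a \<in> ?A"
    then obtain I J where a: "a = DT n J (psi n k ` I)" "is_zinterval n I" "is_zinterval n J" by blast
    hence "I \<subseteq> {..<n}" "J \<subseteq> {..<n}" using zinterval_sub[OF n] unfolding is_zinterval_def by auto
    thus "a \<in> (\<lambda>p. DT n (snd p) (psi n k ` fst p)) ` (Pow {..<n} \<times> Pow {..<n})"
      using a(1) by (intro image_eqI[of _ _ "(I,J)"]) auto
  qed
  thus "finite ?A" by (rule finite_subset) auto
  have "is_zinterval n {}" unfolding is_zinterval_def zinterval_def by (rule exI[of _ 0], rule exI[of _ 0]) simp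
  thus "?A \<noteq> {}" by blast
  fix a assume "a \<in> ?A"
  thus "a \<le> real n * (\<Sum>h\<in>{1..<n}. gb n h * gb n ((h*k) mod n))"
    using DT_bound[OF n k] by blast
qed

lemma coprime_by_primes:
  fixes a b :: nat
  assumes "\<And>p. prime p \<Longrightarrow> p dvd a \<Longrightarrow> p dvd b \<Longrightarrow> False"
  shows "coprime a b"
proof (rule ccontr)
  assume "\<not> coprime a b"
  hence "gcd a b \<noteq> 1" using coprime_iff_gcd_eq_1 by blast
  then obtain p where p: "prime p" "p dvd gcd a b" using prime_factor_nat by blast
  have "p dvd a" "p dvd b" using p(2) by simp_all
  thus False using assms p(1) by blast
qed

lemma units_mem: "k \<in> Zn_units n \<longleftrightarrow> k < n \<and> coprime k n"
  by (simp add: Zn_units_def Zn_def)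

lemma finite_units: "finite (Zn_units n)"
  by (simp add: Zn_units_def Zn_def)

lemma coprime_dvd_mod: "coprime k n \<Longrightarrow> m dvd n \<Longrightarrow> coprime k (m::nat)"
  by (rule coprime_divisors[OF dvd_refl]) 

lemma lift_unit:
  fixes m n c :: nat
  assumes m: "0 < m" and n: "0 < n" and mn: "m dvd n" and c: "coprime c m"
  shows "\<exists>k\<in>Zn_units n. k mod m = c mod m"
proof -
  define P where "P = {p \<in> prime_factors n. \<not> p dvd c}"
  define r where "r = \<Prod>P"
  define k0 where "k0 = c + m * r"
  have fP: "finite P" unfolding P_def by simp
  have Pprime: "\<And>p. p \<in> P \<Longrightarrow> prime p" unfolding P_def by auto
  have rdvd: "p dvd r \<longleftrightarrow> p \<in> P" if p: "prime p" for p
  proof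
    assume "p dvd r"
    then obtain q where q: "q \<in> P" "p dvd q"
      unfolding r_def using prime_dvd_prod_iff[OF fP p, of "\<lambda>x. x"] by auto
    hence "p = q" using primes_dvd_imp_eq[OF p Pprime[OF q(1)]] by blast
    thus "p \<in> P" using q by simp
  next
    assume "p \<in> P" thus "p dvd r" unfolding r_def using dvd_prodI[OF fP, of p "\<lambda>x. x"] by simp
  qed
  have cop: "coprime k0 n"
  proof (rule coprime_by_primes)
    fix p :: nat assume p: "prime p" and pk: "p dvd k0" and pn: "p dvd n"
    have pPF: "p \<in> prime_factors n" using p pn n by (simp add: in_prime_factors_iff)
    show False
    proof (cases "p dvd c")
      case True
      hence "p \<notin> P" unfolding P_def by simp
      hence "\<not> p dvd r" using rdvd[OF p] by simp
      moreover have "\<not> p dvd m"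
      proof
        assume "p dvd m"
        hence "is_unit p" using coprime_common_divisor[OF c True] by simp
        thus False using p by simp
      qed
      moreover have "p dvd m * r" using pk True unfolding k0_def by (simp add: dvd_add_right_iff)
      ultimately show False using p by (simp add: prime_dvd_mult_iff)
    next
      case False
      hence "p \<in> P" unfolding P_def using pPF by simp
      hence "p dvd m * r" using rdvd[OF p] by simp
      hence "p dvd c" using pk unfolding k0_def by (simp add: dvd_add_left_iff)
      thus False using False by simp
    qed
  qed
  define k where "k = k0 mod n"
  have "k \<in> Zn_units n" unfolding units_mem k_def using cop n by simp
  moreover have "k mod m = c mod m"
    unfolding k_def k0_def using mn by (simp add: mod_mod_cancel)
  ultimately show ?thesis by blast
qed

lemma equi_count:
  fixes m n j u v :: nat
  assumes m: "0 < m" and n: "0 < n" and mn: "m dvd n" and j: "coprime j m"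
  assumes u: "u \<in> Zn_units m" and v: "v \<in> Zn_units m"
  shows "card {k \<in> Zn_units n. (j * k) mod m = u} \<le> card {k \<in> Zn_units n. (j * k) mod m = v}"
proof -
  have cu: "coprime u m" and um: "u < m" using u by (simp_all add: units_mem)
  have cv: "coprime v m" and vm: "v < m" using v by (simp_all add: units_mem)
  obtain x where x: "[u * x = 1] (mod m)" using cong_solve_coprime_nat[OF cu] by auto
  have "coprime (u * x) m" using cong_imp_coprime[OF cong_sym[OF x]] by simp
  hence cx: "coprime x m" by simp
  have "coprime (x * v) m" using cx cv by simp
  then obtain w where w: "w \<in> Zn_units n" "w mod m = (x * v) mod m" using lift_unit[OF m n mn] by blast
  have cw: "coprime w n" using w by (simp add: units_mem)
  define f where "f = (\<lambda>k. (w * k) mod n)"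
  have "inj_on f {k \<in> Zn_units n. (j * k) mod m = u}"
  proof (rule inj_onI)
    fix a b assume ab: "a \<in> {k \<in> Zn_units n. (j * k) mod m = u}" "b \<in> {k \<in> Zn_units n. (j * k) mod m = u}" "f a = f b"
    have "[w * a = w * b] (mod n)" using ab(3) unfolding f_def Cong.cong_def .
    hence "[a = b] (mod n)" using cw by (simp add: cong_mult_lcancel_nat)
    moreover have "a < n" "b < n" using ab by (auto simp: units_mem)
    ultimately show "a = b" by (auto intro: cong_less_modulus_unique_nat)
  qed
  moreover have "f ` {k \<in> Zn_units n. (j * k) mod m = u} \<subseteq> {k \<in> Zn_units n. (j * k) mod m = v}"
  proof
    fix y assume "y \<in> f ` {k \<in> Zn_units n. (j * k) mod m = u}"
    then obtain a where a: "a \<in> Zn_units n" "(j * a) mod m = u" "y = f a" by blast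
    have a1: "a < n" "coprime a n" using a(1) by (auto simp: units_mem)
    have yn: "y < n" using a(3) n by (simp add: f_def)
    have cy: "coprime y n" using a(3) cw a1(2) n by (simp add: f_def)
    have e1: "(j * y) mod m = (j * (w * a)) mod m"
    proof -
      have "(j * y) mod m = (j * ((w * a) mod n mod m)) mod m" unfolding a(3) f_def
        by (simp only: mod_mult_right_eq)
      also have "(w * a) mod n mod m = (w * a) mod m" by (rule mod_mod_cancel[OF mn])
      also have "(j * ((w * a) mod m)) mod m = (j * (w * a)) mod m" by (simp only: mod_mult_right_eq)
      finally show ?thesis .
    qed
    have c1: "[w = x * v] (mod m)" using w(2) unfolding Cong.cong_def .
    have c2: "[j * a = u] (mod m)" using a(2) um unfolding Cong.cong_def by simp
    have c3: "[w * (j * a) = (x * v) * u] (mod m)" by (rule cong_mult[OF c1 c2])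
    have c4: "[v * (u * x) = v * 1] (mod m)" by (rule cong_mult[OF cong_refl x])
    have eq: "(x * v) * u = v * (u * x)" by (simp add: ac_simps)
    have "[w * (j * a) = v * (u * x)] (mod m)" using c3 unfolding eq .
    hence "[w * (j * a) = v] (mod m)" using cong_trans c4 by fastforce
    hence "(j * (w * a)) mod m = v" using vm unfolding Cong.cong_def by (simp add: ac_simps)
    hence "(j * y) mod m = v" using e1 by simp
    thus "y \<in> {k \<in> Zn_units n. (j * k) mod m = v}" using yn cy by (simp add: units_mem)
  qed
  moreover have "finite {k \<in> Zn_units n. (j * k) mod m = v}" using finite_units by simp
  ultimately show ?thesis by (rule card_inj_on_le)
qed

lemma equi_sum:
  fixes m n j :: nat and G :: "nat \<Rightarrow> real"
  assumes m: "0 < m" and n: "0 < n" and mn: "m dvd n" and j: "coprime j m"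
  shows "(\<Sum>k\<in>Zn_units n. G ((j * k) mod m))
         = real (card (Zn_units n)) / real (card (Zn_units m)) * (\<Sum>u\<in>Zn_units m. G u)"
proof -
  define A where "A = (\<lambda>u. {k \<in> Zn_units n. (j * k) mod m = u})"
  define u0 where "u0 = 1 mod m"
  have u0: "u0 \<in> Zn_units m" using m by (simp add: u0_def units_mem)
  have cardA: "card (A u) = card (A u0)" if "u \<in> Zn_units m" for u
    using equi_count[OF m n mn j that u0] equi_count[OF m n mn j u0 that] unfolding A_def by simp
  have img: "(\<lambda>k. (j * k) mod m) ` Zn_units n \<subseteq> Zn_units m"
  proof
    fix y assume "y \<in> (\<lambda>k. (j * k) mod m) ` Zn_units n"
    then obtain k where k: "k \<in> Zn_units n" "y = (j * k) mod m" by blast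
    have "coprime k n" using k(1) by (simp add: units_mem)
    hence "coprime k m" using coprime_dvd_mod mn by blast
    thus "y \<in> Zn_units m" using k(2) j m by (simp add: units_mem)
  qed
  have gen: "(\<Sum>k\<in>Zn_units n. H ((j * k) mod m)) = real (card (A u0)) * (\<Sum>u\<in>Zn_units m. H u)"
    for H :: "nat \<Rightarrow> real"
  proof -
    have "(\<Sum>k\<in>Zn_units n. H ((j * k) mod m)) = (\<Sum>u\<in>Zn_units m. \<Sum>k\<in>A u. H ((j * k) mod m))"
      unfolding A_def using sum.group[OF finite_units finite_units img, of "\<lambda>k. H ((j * k) mod m)"]
      by simp
    also have "\<dots> = (\<Sum>u\<in>Zn_units m. real (card (A u0)) * H u)"
    proof (rule sum.cong[OF refl])
      fix u assume uu: "u \<in> Zn_units m"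
      have "(\<Sum>k\<in>A u. H ((j * k) mod m)) = (\<Sum>k\<in>A u. H u)" by (rule sum.cong) (auto simp: A_def)
      also have "\<dots> = real (card (A u)) * H u" by simp
      finally show "(\<Sum>k\<in>A u. H ((j * k) mod m)) = real (card (A u0)) * H u" using cardA[OF uu] by simp
    qed
    also have "\<dots> = real (card (A u0)) * (\<Sum>u\<in>Zn_units m. H u)" by (simp add: sum_distrib_left)
    finally show ?thesis .
  qed
  have "real (card (Zn_units n)) = real (card (A u0)) * real (card (Zn_units m))"
    using gen[of "\<lambda>_. 1"] by simp
  moreover have "card (Zn_units m) > 0" using u0 finite_units card_gt_0_iff by blast
  ultimately show ?thesis using gen[of G] by (simp add: field_simps)
qed

lemma reflect_sum:
  fixes A :: "nat set"
  assumes fin: "finite A" and sub: "A \<subseteq> {1..<n}" and cl: "\<And>u. u \<in> A \<Longrightarrow> n - u \<in> A"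
  shows "(\<Sum>u\<in>A. gb n u) = 2 * (\<Sum>u\<in>A. 1 / real u)"
proof -
  have "(\<Sum>u\<in>A. 1 / (real n - real u)) = (\<Sum>u\<in>A. 1 / real u)"
  proof (rule sum.reindex_bij_witness[of _ "\<lambda>u. n - u" "\<lambda>u. n - u"])
    fix a assume a: "a \<in> A"
    hence an: "a < n" using sub by auto
    show "n - (n - a) = a" using an by simp
    show "n - a \<in> A" by (rule cl[OF a])
    show "1 / real (n - a) = 1 / (real n - real a)" using an by (simp add: of_nat_diff)
    show "n - (n - a) = a" using an by simp
    show "n - a \<in> A" by (rule cl[OF a])
  qed
  thus ?thesis unfolding gb_def by (simp add: sum.distrib)
qed

lemma harm_bound:
  assumes "1 \<le> N"
  shows "(\<Sum>j\<in>{1..N}. 1 / real j) \<le> 1 + ln (real N)"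
  using assms
proof (induction N rule: dec_induct)
  case base
  show ?case by simp
next
  case (step N)
  have N: "real N \<ge> 1" using step by simp
  have "1 / real (Suc N) \<le> ln (real (Suc N)) - ln (real N)"
  proof -
    have "ln (real N / real (Suc N)) \<le> real N / real (Suc N) - 1"
      by (rule ln_le_minus_one) (use N in simp)
    moreover have "ln (real N / real (Suc N)) = ln (real N) - ln (real (Suc N))"
      using N by (simp add: ln_div)
    moreover have "real N / real (Suc N) - 1 = - (1 / real (Suc N))" by (simp add: field_simps)
    ultimately show ?thesis by linarith
  qed
  moreover have "(\<Sum>j\<in>{1..Suc N}. 1 / real j) = (\<Sum>j\<in>{1..N}. 1 / real j) + 1 / real (Suc N)"
    by simp
  ultimately show ?case using step.IH by linarith
qed

definition PP :: "nat \<Rightarrow> real" where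
  "PP m = (\<Sum>B\<in>Pow (prime_factors m). 1 / real (\<Prod>B))"

lemma units_pos:
  assumes "1 < m" "u \<in> Zn_units m" shows "0 < u" "u < m" "coprime u m"
proof -
  show "u < m" "coprime u m" using assms(2) by (simp_all add: units_mem)
  show "0 < u"
  proof (rule ccontr)
    assume "\<not> 0 < u" hence "u = 0" by simp
    hence "coprime 0 m" using \<open>coprime u m\<close> by simp
    thus False using assms(1) by simp
  qed
qed

lemma prod_pf_dvd:
  fixes m :: nat and B :: "nat set"
  assumes m: "m > 0" and B: "B \<subseteq> prime_factors m"
  shows "\<Prod>B dvd m"
proof -
  have "\<Prod>B dvd \<Prod>(prime_factors m)" using B by (intro prod_dvd_prod_subset) auto
  also have "\<Prod>(prime_factors m) dvd (\<Prod>p\<in>prime_factors m. p ^ multiplicity p m)"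
    by (intro prod_dvd_prod) (auto simp: prime_factors_multiplicity)
  also have "\<dots> = m" using prime_factorization_nat[OF m] by simp
  finally show ?thesis .
qed

lemma pf_dvd_iff:
  fixes m v p :: nat and C :: "nat set"
  assumes m: "m > 0" and v: "coprime v m" and C: "C \<subseteq> prime_factors m" and p: "p \<in> prime_factors m"
  shows "p dvd v * \<Prod>C \<longleftrightarrow> p \<in> C"
proof -
  have pp: "prime p" and pm: "p dvd m" using p by (auto simp: in_prime_factors_iff)
  have fC: "finite C" using C finite_subset by blast
  have nv: "\<not> p dvd v"
  proof
    assume "p dvd v"
    hence "is_unit p" using coprime_common_divisor[OF v _ pm] by simp
    thus False using pp by simp
  qed
  have "p dvd \<Prod>C \<longleftrightarrow> p \<in> C"
  proof
    assume "p dvd \<Prod>C"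
    then obtain q where q: "q \<in> C" "p dvd q" using prime_dvd_prod_iff[OF fC pp, of "\<lambda>x. x"] by auto
    have "prime q" using q(1) C by (auto simp: in_prime_factors_iff)
    hence "p = q" using primes_dvd_imp_eq[OF pp] q(2) by blast
    thus "p \<in> C" using q(1) by simp
  next
    assume "p \<in> C" thus "p dvd \<Prod>C" using dvd_prodI[OF fC, of p "\<lambda>x. x"] by simp
  qed
  thus ?thesis using nv pp by (simp add: prime_dvd_mult_iff)
qed

lemma coprime_harm:
  assumes m: "1 < m"
  shows "(\<Sum>u\<in>Zn_units m. 1 / real u) * PP m \<le> 1 + 2 * ln (real m)"
proof -
  let ?PF = "prime_factors m"
  let ?X = "Zn_units m \<times> Pow ?PF"
  define f where "f = (\<lambda>x::nat \<times> nat set. fst x * \<Prod>(snd x))"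
  have m0: "m > 0" using m by simp
  have inj: "inj_on f ?X"
  proof (rule inj_onI)
    fix x y assume x: "x \<in> ?X" and y: "y \<in> ?X" and e: "f x = f y"
    obtain u B where xe: "x = (u, B)" by (cases x)
    obtain u' B' where ye: "y = (u', B')" by (cases y)
    have u: "coprime u m" and B: "B \<subseteq> ?PF" using x xe by (auto simp: units_mem)
    have u': "coprime u' m" and B': "B' \<subseteq> ?PF" using y ye by (auto simp: units_mem)
    have e': "u * \<Prod>B = u' * \<Prod>B'" using e xe ye by (simp add: f_def)
    have "B = B'"
    proof (intro equalityI subsetI)
      fix p assume "p \<in> B"
      hence pp: "p \<in> ?PF" using B by auto
      have "p dvd u * \<Prod>B" using pf_dvd_iff[OF m0 u B pp] \<open>p \<in> B\<close> by simp
      hence "p dvd u' * \<Prod>B'" using e' by simp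
      thus "p \<in> B'" using pf_dvd_iff[OF m0 u' B' pp] by simp
    next
      fix p assume "p \<in> B'"
      hence pp: "p \<in> ?PF" using B' by auto
      have "p dvd u' * \<Prod>B'" using pf_dvd_iff[OF m0 u' B' pp] \<open>p \<in> B'\<close> by simp
      hence "p dvd u * \<Prod>B" using e' by simp
      thus "p \<in> B" using pf_dvd_iff[OF m0 u B pp] by simp
    qed
    moreover have "\<Prod>B > 0" using prod_pf_dvd[OF m0 B] m0 by (metis dvd_0_left_iff gr0I)
    ultimately have "u = u'" using e' by simp
    thus "x = y" using xe ye \<open>B = B'\<close> by simp
  qed
  have img: "f ` ?X \<subseteq> {1..m * m}"
  proof
    fix z assume "z \<in> f ` ?X"
    then obtain u B where uB: "u \<in> Zn_units m" "B \<subseteq> ?PF" "z = u * \<Prod>B" by (auto simp: f_def)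
    have u: "0 < u" "u < m" using units_pos[OF m uB(1)] by auto
    have d: "\<Prod>B dvd m" by (rule prod_pf_dvd[OF m0 uB(2)])
    have b1: "\<Prod>B \<le> m" using dvd_imp_le[OF d m0] .
    have b0: "\<Prod>B > 0" using d m0 by (metis dvd_0_left_iff gr0I)
    have "z \<le> m * m" using uB(3) u b1 by (simp add: mult_le_mono)
    moreover have "1 \<le> z" using uB(3) u b0 by simp
    ultimately show "z \<in> {1..m * m}" by simp
  qed
  have "(\<Sum>u\<in>Zn_units m. 1 / real u) * PP m
        = (\<Sum>u\<in>Zn_units m. \<Sum>B\<in>Pow ?PF. 1 / real u * (1 / real (\<Prod>B)))"
    unfolding PP_def by (simp add: sum_product)
  also have "\<dots> = (\<Sum>x\<in>?X. 1 / real (f x))"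
    unfolding sum.cartesian_product by (intro sum.cong refl) (auto simp: f_def)
  also have "\<dots> = (\<Sum>z\<in>f ` ?X. 1 / real z)"
    by (simp add: sum.reindex[OF inj])
  also have "\<dots> \<le> (\<Sum>z\<in>{1..m * m}. 1 / real z)"
    by (rule sum_mono2[OF _ img]) auto
  also have "\<dots> \<le> 1 + ln (real (m * m))"
    by (rule harm_bound) (use m in simp)
  also have "ln (real (m * m)) = 2 * ln (real m)" using m by (simp add: ln_mult)
  finally show ?thesis .
qed

lemma PP_prod: "PP m = (\<Prod>p\<in>prime_factors m. 1 + 1 / real p)"
proof -
  have "(\<Prod>p\<in>prime_factors m. 1 / real p + 1)
        = (\<Sum>X\<in>Pow (prime_factors m). (\<Prod>p\<in>X. 1 / real p) * (\<Prod>p\<in>prime_factors m - X. 1))"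
    by (rule prod_add) simp
  also have "\<dots> = PP m" unfolding PP_def
    by (intro sum.cong refl) (simp add: prod_dividef)
  finally show ?thesis by (simp add: add.commute)
qed

lemma card_units_totient:
  assumes "m > 0" shows "card (Zn_units m) = totient m"
proof (cases "m = 1")
  case True
  have "Zn_units 1 = {0}" by (auto simp: units_mem)
  thus ?thesis using True by simp
next
  case False
  hence m: "m > 1" using assms by simp
  have "Zn_units m = totatives m"
  proof (intro equalityI subsetI)
    fix k assume k: "k \<in> Zn_units m"
    have "0 < k" "k < m" "coprime k m" using units_pos[OF m k] by auto
    thus "k \<in> totatives m" by (simp add: in_totatives_iff)
  next
    fix k assume k: "k \<in> totatives m"
    hence "k \<noteq> m" using m by (auto simp: in_totatives_iff)
    thus "k \<in> Zn_units m" using k by (auto simp: in_totatives_iff units_mem)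
  qed
  thus ?thesis by (simp add: totient_def)
qed

lemma tele_aux: assumes "(x::real) \<ge> 1"
  shows "(1 - 1 / (x + 1)^2) * ((x + 1) / (2 * x)) = (x + 2) / (2 * (x + 1))"
proof -
  have y: "(x + 1)^2 \<noteq> 0" "x * (x + 1) \<noteq> 0" using assms by auto
  have "1 - 1 / (x + 1)^2 = ((x + 1)^2 - 1) / (x + 1)^2"
    using y(1) by (simp add: diff_divide_distrib)
  also have "(x + 1)^2 - 1 = x * (x + 2)" by (simp add: power2_eq_square algebra_simps)
  finally have "(1 - 1 / (x + 1)^2) * ((x + 1) / (2 * x)) = (x * (x + 2)) / (x + 1)^2 * ((x + 1) / (2 * x))"
    by simp
  also have "\<dots> = ((x + 2) * (x * (x + 1))) / ((2 * (x + 1)) * (x * (x + 1)))"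
    by (simp add: power2_eq_square ac_simps)
  also have "\<dots> = (x + 2) / (2 * (x + 1))" using y(2) by (rule mult_divide_mult_cancel_right)
  finally show ?thesis .
qed

lemma tele: assumes "1 \<le> N" shows "(\<Prod>j\<in>{2..N}. 1 - 1 / (real j)^2) = (real N + 1) / (2 * real N)"
  using assms
proof (induction N rule: dec_induct)
  case base
  show ?case by simp
next
  case (step N)
  have "{2..Suc N} = insert (Suc N) {2..N}" using step by auto
  hence "(\<Prod>j\<in>{2..Suc N}. 1 - 1 / (real j)^2) = (1 - 1 / (real (Suc N))^2) * (\<Prod>j\<in>{2..N}. 1 - 1 / (real j)^2)"
    by simp
  also have "\<dots> = (1 - 1 / (real N + 1)^2) * ((real N + 1) / (2 * real N))" using step.IH by simp
  also have "\<dots> = (real N + 2) / (2 * (real N + 1))"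
    by (rule tele_aux) (use step in simp)
  also have "\<dots> = (real (Suc N) + 1) / (2 * real (Suc N))" by (simp add: algebra_simps)
  finally show ?case .
qed

lemma prod_sq_bound:
  assumes A: "A \<subseteq> {2..N}"
  shows "1/2 \<le> (\<Prod>p\<in>A. 1 - 1 / (real p)^2)"
proof (cases "N \<ge> 1")
  case False
  hence "A = {}" using A by auto
  thus ?thesis by simp
next
  case True
  have fA: "finite A" using A finite_subset by blast
  have nn: "0 \<le> 1 - 1 / (real p)^2 \<and> 1 - 1 / (real p)^2 \<le> 1" if "p \<in> {2..N}" for p
  proof -
    have "real p \<ge> 1" using that by simp
    hence "(real p)^2 \<ge> 1" by simp
    moreover have "(real p)^2 > 0" using \<open>real p \<ge> 1\<close> by simp
    ultimately have "1 / (real p)^2 \<le> 1 / 1" by (intro divide_left_mono) auto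
    hence "1 / (real p)^2 \<le> 1" by simp
    thus ?thesis by simp
  qed
  have "(\<Prod>p\<in>{2..N}. 1 - 1 / (real p)^2) = (\<Prod>p\<in>{2..N} - A. 1 - 1 / (real p)^2) * (\<Prod>p\<in>A. 1 - 1 / (real p)^2)"
    by (rule prod.subset_diff[OF A]) simp
  also have "\<dots> \<le> 1 * (\<Prod>p\<in>A. 1 - 1 / (real p)^2)"
    by (intro mult_right_mono prod_le_1 prod_nonneg) (use nn A in auto)
  finally have "(\<Prod>p\<in>{2..N}. 1 - 1 / (real p)^2) \<le> (\<Prod>p\<in>A. 1 - 1 / (real p)^2)" by simp
  moreover have "1/2 \<le> (real N + 1) / (2 * real N)" using True by (simp add: field_simps)
  ultimately show ?thesis using tele[OF True] by linarith
qed

lemma units_PP: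
  assumes m: "m > 0" shows "real m \<le> 2 * real (card (Zn_units m)) * PP m"
proof -
  let ?PF = "prime_factors m"
  have sub: "?PF \<subseteq> {2..m}"
  proof
    fix p assume "p \<in> ?PF"
    hence "prime p" "p dvd m" by (auto simp: in_prime_factors_iff)
    thus "p \<in> {2..m}" using m by (auto simp: prime_ge_2_nat dvd_imp_le)
  qed
  have "real (card (Zn_units m)) * PP m
        = real m * ((\<Prod>p\<in>?PF. 1 - 1 / real p) * (\<Prod>p\<in>?PF. 1 + 1 / real p))"
    unfolding card_units_totient[OF m] totient_formula2 PP_prod by simp
  also have "(\<Prod>p\<in>?PF. 1 - 1 / real p) * (\<Prod>p\<in>?PF. 1 + 1 / real p) = (\<Prod>p\<in>?PF. 1 - 1 / (real p)^2)"
    unfolding prod.distrib[symmetric]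
  proof (intro prod.cong refl)
    fix p assume "p \<in> ?PF"
    hence "real p > 0" using sub by auto
    thus "(1 - 1 / real p) * (1 + 1 / real p) = 1 - 1 / (real p)^2"
      by (simp add: field_simps power2_eq_square)
  qed
  finally have "real (card (Zn_units m)) * PP m = real m * (\<Prod>p\<in>?PF. 1 - 1 / (real p)^2)" .
  moreover have "1/2 \<le> (\<Prod>p\<in>?PF. 1 - 1 / (real p)^2)" by (rule prod_sq_bound[OF sub])
  ultimately show ?thesis
  proof -
    assume e: "real (card (Zn_units m)) * PP m = real m * (\<Prod>p\<in>?PF. 1 - 1 / (real p)^2)"
      and q: "1/2 \<le> (\<Prod>p\<in>?PF. 1 - 1 / (real p)^2)"
    have "real m * 1 \<le> real m * (2 * (\<Prod>p\<in>?PF. 1 - 1 / (real p)^2))"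
      using q by (intro mult_left_mono) auto
    also have "\<dots> = 2 * real (card (Zn_units m)) * PP m" using e by simp
    finally show ?thesis by simp
  qed
qed

lemma gb_scale:
  assumes "d > 0"
  shows "gb (d * m) (d * x) = gb m x / real d"
proof -
  have "real (d * m) - real (d * x) = real d * (real m - real x)" by (simp add: algebra_simps)
  hence "gb (d * m) (d * x) = inverse (real d) * inverse (real x) + inverse (real d) * inverse (real m - real x)"
    unfolding gb_def by (simp add: divide_inverse inverse_mult_distrib)
  also have "\<dots> = gb m x / real d" unfolding gb_def by (simp add: divide_inverse algebra_simps)
  finally show ?thesis .
qed

lemma units_reflect:
  assumes m: "1 < m"
  shows "(\<Sum>u\<in>Zn_units m. gb m u) = 2 * (\<Sum>u\<in>Zn_units m. 1 / real u)"
proof (rule reflect_sum[OF finite_units])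
  show "Zn_units m \<subseteq> {1..<m}" using units_pos[OF m] by force
  fix u assume u: "u \<in> Zn_units m"
  have "0 < u" "u < m" "coprime u m" using units_pos[OF m u] by auto
  moreover have "gcd (m - u) m = gcd u m" using \<open>u < m\<close> by (simp add: gcd_diff2_nat)
  ultimately have "coprime (m - u) m" by (metis coprime_iff_gcd_eq_1)
  thus "m - u \<in> Zn_units m" using \<open>0 < u\<close> \<open>u < m\<close> by (simp add: units_mem)
qed

lemma key:
  fixes n h :: nat
  assumes n: "1 < n" and h: "0 < h" "h < n"
  shows "(\<Sum>k\<in>Zn_units n. gb n ((h * k) mod n))
         \<le> 4 * real (card (Zn_units n)) * (1 + 2 * ln (real n)) / real n"
proof -
  define d where "d = gcd h n"
  define m where "m = n div d"
  define j where "j = h div d"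
  have d0: "0 < d" using h by (simp add: d_def)
  have nd: "n = d * m" unfolding m_def d_def by simp
  have hd: "h = d * j" unfolding j_def d_def by simp
  have cj: "coprime j m" unfolding j_def m_def d_def by (rule div_gcd_coprime) (use h in simp)
  have m0: "0 < m" using nd n by (cases m) auto
  have m1: "1 < m"
  proof (rule ccontr)
    assume "\<not> 1 < m"
    hence "m = 1" using m0 by simp
    hence "n = d" using nd by simp
    moreover have "d dvd h" unfolding d_def by simp
    ultimately have "n dvd h" by simp
    thus False using h nat_dvd_not_less by blast
  qed
  have mn: "m dvd n" using nd by simp
  have n0: "0 < n" using n by simp
  define cU where "cU = real (card (Zn_units n))"
  define cM where "cM = real (card (Zn_units m))"
  define Sp where "Sp = (\<Sum>u\<in>Zn_units m. 1 / real u)"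
  define L where "L = 1 + 2 * ln (real n)"
  have cM0: "cM > 0"
  proof -
    have "1 \<in> Zn_units m" using m1 by (simp add: units_mem)
    thus ?thesis unfolding cM_def using finite_units card_gt_0_iff by force
  qed
  have cU0: "cU \<ge> 0" unfolding cU_def by simp
  have Sp0: "Sp \<ge> 0" unfolding Sp_def by (intro sum_nonneg) simp
  have lnm: "ln (real m) \<le> ln (real n)" using m0 nd d0 by (simp add: ln_le_cancel_iff)
  have SpL: "Sp * PP m \<le> L" using coprime_harm[OF m1] lnm unfolding Sp_def L_def by linarith
  have mP: "real m \<le> 2 * cM * PP m" using units_PP[OF m0] unfolding cM_def .
  have "(\<Sum>k\<in>Zn_units n. gb n ((h * k) mod n)) = (\<Sum>k\<in>Zn_units n. gb m ((j * k) mod m) / real d)"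
  proof (rule sum.cong[OF refl])
    fix k
    have "(h * k) mod n = (d * (j * k)) mod (d * m)" unfolding hd nd by (simp only: mult.assoc)
    also have "\<dots> = d * ((j * k) mod m)" by (rule mult_mod_right[symmetric])
    finally have "(h * k) mod n = d * ((j * k) mod m)" .
    thus "gb n ((h * k) mod n) = gb m ((j * k) mod m) / real d" unfolding nd using gb_scale[OF d0] by simp
  qed
  also have "\<dots> = (\<Sum>k\<in>Zn_units n. gb m ((j * k) mod m)) / real d" by (simp add: sum_divide_distrib)
  also have "(\<Sum>k\<in>Zn_units n. gb m ((j * k) mod m)) = cU / cM * (\<Sum>u\<in>Zn_units m. gb m u)"
    unfolding cU_def cM_def by (rule equi_sum[OF m0 n0 mn cj])
  also have "(\<Sum>u\<in>Zn_units m. gb m u) = 2 * Sp" unfolding Sp_def by (rule units_reflect[OF m1])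
  finally have eq: "(\<Sum>k\<in>Zn_units n. gb n ((h * k) mod n)) = cU / cM * (2 * Sp) / real d" .
  have "Sp * real m \<le> Sp * (2 * cM * PP m)" by (rule mult_left_mono[OF mP Sp0])
  also have "\<dots> = 2 * cM * (Sp * PP m)" by simp
  also have "\<dots> \<le> 2 * cM * L" using SpL cM0 by simp
  finally have A: "Sp * real m \<le> 2 * cM * L" .
  have "cU / cM * (2 * Sp) / real d = (cU * (2 * Sp * real m)) / (cM * real n)"
    using cM0 d0 m0 unfolding nd by (simp add: field_simps)
  also have "\<dots> \<le> (cU * (4 * cM * L)) / (cM * real n)"
  proof (rule divide_right_mono)
    have "2 * Sp * real m \<le> 4 * cM * L" using A by linarith
    thus "cU * (2 * Sp * real m) \<le> cU * (4 * cM * L)" by (rule mult_left_mono) (rule cU0)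
    show "0 \<le> cM * real n" using cM0 by simp
  qed
  also have "\<dots> = 4 * cU * L / real n" using cM0 by (simp add: field_simps)
  finally show ?thesis unfolding eq cU_def L_def .
qed

lemma gb_nonneg: "0 < h \<Longrightarrow> h < n \<Longrightarrow> 0 \<le> gb n h"
  unfolding gb_def by simp

lemma sum_gb:
  assumes n: "1 < n"
  shows "(\<Sum>h\<in>{1..<n}. gb n h) \<le> 2 * (1 + ln (real n))"
proof -
  have "(\<Sum>h\<in>{1..<n}. gb n h) = 2 * (\<Sum>h\<in>{1..<n}. 1 / real h)"
    by (rule reflect_sum) auto
  also have "(\<Sum>h\<in>{1..<n}. 1 / real h) \<le> (\<Sum>h\<in>{1..n}. 1 / real h)"
    by (rule sum_mono2) auto
  also have "\<dots> \<le> 1 + ln (real n)" by (rule harm_bound) (use n in simp)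
  finally show ?thesis by simp
qed

lemma avg_bound:
  fixes n :: nat
  assumes n: "3 \<le> n"
  shows "(\<Sum>k\<in>Zn_units n. discrepancy n (psi n k))
         \<le> real (card (Zn_units n)) * (8 * (1 + 2 * ln (real n)) * (1 + ln (real n)))"
proof -
  have n1: "1 < n" and n0: "0 < n" using n by auto
  define cU where "cU = real (card (Zn_units n))"
  define K where "K = 4 * cU * (1 + 2 * ln (real n)) / real n"
  define H where "H = {1..<n}"
  have lnn: "0 \<le> ln (real n)" using n by simp
  have "(\<Sum>k\<in>Zn_units n. discrepancy n (psi n k))
        \<le> (\<Sum>k\<in>Zn_units n. real n * (\<Sum>h\<in>H. gb n h * gb n ((h * k) mod n)))"
    unfolding H_def by (intro sum_mono disc_bound[OF n0]) (simp add: units_mem)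
  also have "\<dots> = real n * (\<Sum>k\<in>Zn_units n. \<Sum>h\<in>H. gb n h * gb n ((h * k) mod n))"
    by (simp add: sum_distrib_left)
  also have "\<dots> = real n * (\<Sum>h\<in>H. \<Sum>k\<in>Zn_units n. gb n h * gb n ((h * k) mod n))"
    by (simp only: sum.swap[of _ "Zn_units n" H])
  also have "\<dots> = real n * (\<Sum>h\<in>H. gb n h * (\<Sum>k\<in>Zn_units n. gb n ((h * k) mod n)))"
    by (simp add: sum_distrib_left)
  also have "\<dots> \<le> real n * (\<Sum>h\<in>H. gb n h * K)"
  proof (rule mult_left_mono, rule sum_mono)
    fix h assume "h \<in> H"
    hence h: "0 < h" "h < n" unfolding H_def by auto
    show "gb n h * (\<Sum>k\<in>Zn_units n. gb n ((h * k) mod n)) \<le> gb n h * K"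
      unfolding K_def cU_def by (rule mult_left_mono[OF key[OF n1 h] gb_nonneg[OF h]])
  qed simp
  also have "\<dots> = real n * (K * (\<Sum>h\<in>H. gb n h))" by (simp add: sum_distrib_left mult.commute)
  also have "\<dots> = 4 * cU * (1 + 2 * ln (real n)) * (\<Sum>h\<in>H. gb n h)"
    unfolding K_def using n0 by simp
  also have "\<dots> \<le> 4 * cU * (1 + 2 * ln (real n)) * (2 * (1 + ln (real n)))"
    unfolding H_def using sum_gb[OF n1] lnn by (intro mult_left_mono) (auto simp: cU_def)
  also have "\<dots> = cU * (8 * (1 + 2 * ln (real n)) * (1 + ln (real n)))" by (simp add: algebra_simps)
  finally show ?thesis unfolding cU_def .
qed

theorem mainTheorem5:
  shows "\<exists>C>0. \<forall>n::nat. n \<ge> 3 \<longrightarrow>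
     (\<Sum>k\<in>Zn_units n. discrepancy n (psi n k)) / real (card (Zn_units n))
        \<le> C * (ln (real n))\<^sup>2 * ln (ln (real n))
   \<and> (\<exists>k\<in>Zn_units n. discrepancy n (psi n k) \<le> C * (ln (real n))\<^sup>2 * ln (ln (real n)))"
proof -
  define C where "C = 48 / ln (ln (3::real))"
  have l3: "ln (ln (3::real)) > 0" using ln3_gt_1 by simp
  have C0: "C > 0" using l3 by (simp add: C_def)
  have main: "(\<Sum>k\<in>Zn_units n. discrepancy n (psi n k)) / real (card (Zn_units n))
        \<le> C * (ln (real n))\<^sup>2 * ln (ln (real n))
   \<and> (\<exists>k\<in>Zn_units n. discrepancy n (psi n k) \<le> C * (ln (real n))\<^sup>2 * ln (ln (real n)))"
    if n3: "n \<ge> 3" for n :: nat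
  proof -
    define B where "B = C * (ln (real n))\<^sup>2 * ln (ln (real n))"
    define L where "L = ln (real n)"
    define cU where "cU = real (card (Zn_units n))"
    have L1: "L \<ge> 1"
    proof -
      have "ln (3::real) \<le> ln (real n)" using n3 by simp
      thus ?thesis using ln3_gt_1 unfolding L_def by linarith
    qed
    have lnL: "ln (ln (3::real)) \<le> ln L"
    proof -
      have "ln (3::real) \<le> L" using n3 unfolding L_def by simp
      thus ?thesis using ln3_gt_1 by simp
    qed
    have CL: "48 \<le> C * ln L"
    proof -
      have "C * ln (ln 3) \<le> C * ln L" using lnL C0 by simp
      moreover have "C * ln (ln 3) = 48" using l3 by (simp add: C_def)
      ultimately show ?thesis by simp
    qed
    have u1: "1 \<in> Zn_units n" using n3 by (simp add: units_mem)
    have cU0: "cU > 0" unfolding cU_def using u1 finite_units card_gt_0_iff by force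
    have poly: "8 * (1 + 2 * L) * (1 + L) \<le> 48 * (L * L)"
    proof -
      have "L \<le> L * L" using L1 by simp
      moreover have "1 * 1 \<le> L * L" using L1 by (intro mult_mono) auto
      moreover have "8 * (1 + 2 * L) * (1 + L) = 8 + 24 * L + 16 * (L * L)" by (simp add: algebra_simps)
      ultimately show ?thesis by linarith
    qed
    have "48 * (L * L) \<le> (C * ln L) * (L * L)" using CL by (intro mult_right_mono) auto
    also have "\<dots> = B" unfolding B_def L_def by (simp add: power2_eq_square)
    finally have bnd: "8 * (1 + 2 * L) * (1 + L) \<le> B" using poly by linarith
    have S0: "(\<Sum>k\<in>Zn_units n. discrepancy n (psi n k)) \<le> cU * (8 * (1 + 2 * L) * (1 + L))"
      using avg_bound[OF n3] unfolding cU_def L_def .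
    have "cU * (8 * (1 + 2 * L) * (1 + L)) \<le> cU * B"
      by (rule mult_left_mono[OF bnd]) (use cU0 in simp)
    with S0 have S: "(\<Sum>k\<in>Zn_units n. discrepancy n (psi n k)) \<le> cU * B" by (rule order_trans)
    have avg: "(\<Sum>k\<in>Zn_units n. discrepancy n (psi n k)) / cU \<le> B"
      using S cU0 by (simp add: divide_le_eq mult.commute)
    have ex: "\<exists>k\<in>Zn_units n. discrepancy n (psi n k) \<le> B"
    proof (rule ccontr)
      assume "\<not> ?thesis"
      hence all: "\<And>k. k \<in> Zn_units n \<Longrightarrow> B < discrepancy n (psi n k)" by force
      have "(\<Sum>k\<in>Zn_units n. B) < (\<Sum>k\<in>Zn_units n. discrepancy n (psi n k))"
        using u1 finite_units all by (intro sum_strict_mono) auto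
      hence "cU * B < (\<Sum>k\<in>Zn_units n. discrepancy n (psi n k))" unfolding cU_def by simp
      thus False using S by simp
    qed
    show ?thesis using avg ex unfolding B_def cU_def by simp
  qed
  show ?thesis using C0 main by blast
qed

end
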